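(* Let $x_1<x_2$, $b_1,b_2\in\mathbb{R}$ and $m>0$ with $|b_2-b_1|\leq m(x_2-x_1)$. Let $x_0=\frac12(x_1+x_2)+\frac1{2m}(b_2-b_1)\in[x_1,x_2]$ and $b_0=\frac12(b_1+b_2)+\frac12m(x_2-x_1)$. If $B$ is a Brownian bridge (diffusion parameter one) on $[x_1,x_2]$ with $B(x_1)=b_1$, $B(x_2)=b_2$, and $N$ is a standard Gaussian random variable, then $$\mathbb{P}\big(B(x_0)\geq b_0\big)\geq\mathbb{P}\big(N\geq(x_2-x_1)^{1/2}m\big).$$ *)

theory Defs
  imports "HOL-Probability.Probability"
begin

definition bb_mean :: "real \<Rightarrow> real \<Rightarrow> real \<Rightarrow> real \<Rightarrow> real \<Rightarrow> real" where
  "bb_mean x1 x2 b1 b2 t = b1 + (t - x1) / (x2 - x1) * (b2 - b1)"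

definition bb_cov :: "real \<Rightarrow> real \<Rightarrow> real \<Rightarrow> real \<Rightarrow> real" where
  "bb_cov x1 x2 s t = (min s t - x1) * (x2 - max s t) / (x2 - x1)"

definition gaussian_rv :: "'a measure \<Rightarrow> ('a \<Rightarrow> real) \<Rightarrow> real \<Rightarrow> real \<Rightarrow> bool" where
  "gaussian_rv M X mu v \<longleftrightarrow>
     X \<in> borel_measurable M \<and>
     (if v = 0 then (AE \<omega> in M. X \<omega> = mu)
      else v > 0 \<and> distributed M lborel X (normal_density mu (sqrt v)))"

text \<open>Brownian bridge on [x1,x2] from b1 to b2: a process with continuous paths that is
  Gaussian with the bridge mean and covariance, i.e. every finite linear combination
  of its values is Gaussian with the corresponding mean and variance.\<close>

definition brownian_bridge ::
  "'a measure \<Rightarrow> real \<Rightarrow> real \<Rightarrow> real \<Rightarrow> real \<Rightarrow> (real \<Rightarrow> 'a \<Rightarrow> real) \<Rightarrow> bool" where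
  "brownian_bridge M x1 x2 b1 b2 B \<longleftrightarrow>
     prob_space M \<and>
     (\<forall>t\<in>{x1..x2}. B t \<in> borel_measurable M) \<and>
     (AE \<omega> in M. continuous_on {x1..x2} (\<lambda>t. B t \<omega>)) \<and>
     (\<forall>ts cs :: real list. length cs = length ts \<longrightarrow> set ts \<subseteq> {x1..x2} \<longrightarrow>
        gaussian_rv M (\<lambda>\<omega>. \<Sum>i<length ts. cs ! i * B (ts ! i) \<omega>)
          (\<Sum>i<length ts. cs ! i * bb_mean x1 x2 b1 b2 (ts ! i))
          (\<Sum>i<length ts. \<Sum>j<length ts. cs ! i * cs ! j * bb_cov x1 x2 (ts ! i) (ts ! j)))"

end

theory Submission
  imports Defs
begin

lemma same_dist_ge:
  fixes X Y :: "'a \<Rightarrow> real"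
  assumes "distributed M lborel X f" "distributed M lborel Y f"
  shows "measure M {\<omega> \<in> space M. X \<omega> \<ge> c} = measure M {\<omega> \<in> space M. Y \<omega> \<ge> c}"
proof -
  have "{\<omega> \<in> space M. X \<omega> \<ge> c} = X -` {c..} \<inter> space M" by auto
  moreover have "{\<omega> \<in> space M. Y \<omega> \<ge> c} = Y -` {c..} \<inter> space M" by auto
  moreover have "emeasure M (X -` {c..} \<inter> space M) = emeasure M (Y -` {c..} \<inter> space M)"
    using distributed_emeasure[OF assms(1), of "{c..}"] distributed_emeasure[OF assms(2), of "{c..}"]
    using atLeast_borel[of c] by simp
  ultimately show ?thesis by (simp add: measure_def)
qed

theorem mainTheorem12:
  fixes M :: "'a measure" and B :: "real \<Rightarrow> 'a \<Rightarrow> real" and N :: "'a \<Rightarrow> real"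
    and x1 x2 b1 b2 m :: real
  assumes "x1 < x2" and "m > 0" and "\<bar>b2 - b1\<bar> \<le> m * (x2 - x1)"
    and "brownian_bridge M x1 x2 b1 b2 B"
    and "distributed M lborel N std_normal_density"
  shows "measure M {\<omega> \<in> space M. B ((x1 + x2) / 2 + (b2 - b1) / (2 * m)) \<omega>
                                    \<ge> (b1 + b2) / 2 + m * (x2 - x1) / 2}
         \<ge> measure M {\<omega> \<in> space M. N \<omega> \<ge> sqrt (x2 - x1) * m}"
proof -
  define x0 where "x0 = (x1 + x2) / 2 + (b2 - b1) / (2 * m)"
  define b0 where "b0 = (b1 + b2) / 2 + m * (x2 - x1) / 2"
  define mu where "mu = bb_mean x1 x2 b1 b2 x0"
  define v where "v = bb_cov x1 x2 x0 x0"
  define L where "L = x2 - x1"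
  define d where "d = b2 - b1"
  have L: "L > 0" using assms(1) by (simp add: L_def)
  have dL: "\<bar>d\<bar> \<le> m * L" using assms(3) by (simp add: d_def L_def)
  have PS: "prob_space M" using assms(4) by (simp add: brownian_bridge_def)
  interpret prob_space M by (rule PS)
  have "\<bar>d\<bar> / (2*m) \<le> L / 2" using dL assms(2) by (simp add: field_simps)
  moreover have "\<bar>d\<bar> / (2*m) = \<bar>d / (2*m)\<bar>" using assms(2) by simp
  ultimately have dd: "- (L/2) \<le> d / (2*m) \<and> d / (2*m) \<le> L/2" by linarith
  have "x0 = x1 + L/2 + d/(2*m)" unfolding x0_def L_def d_def by (simp add: field_simps)
  then have "x1 \<le> x0" "x0 \<le> x2" using dd L_def by linarith+
  hence x0in: "x0 \<in> {x1..x2}" by simp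
  have G: "gaussian_rv M (B x0) mu v"
    using assms(4) x0in unfolding brownian_bridge_def
    apply (elim conjE)
    apply (drule spec[of _ "[x0]"], drule spec[of _ "[1]"])
    by (simp add: mu_def v_def)
  have mueq: "b0 - mu = (m^2*L^2 - d^2) / (2*m*L)"
    using L assms(2) unfolding b0_def mu_def bb_mean_def L_def d_def x0_def
    by (simp add: field_simps power2_eq_square)
  have veq: "v = (m^2*L^2 - d^2) / (4*m^2*L)"
    using L assms(2) unfolding v_def bb_cov_def L_def d_def x0_def
    by (simp add: field_simps power2_eq_square)
  have d2: "d^2 \<le> (m*L)^2" using dL by (metis abs_le_square_iff abs_of_nonneg L assms(2) less_le mult_pos_pos power2_abs)
  show ?thesis
  proof (cases "v = 0")
    case True
    hence AE: "AE \<omega> in M. B x0 \<omega> = mu" using G by (simp add: gaussian_rv_def)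
    have "m^2*L^2 - d^2 = 0" using True veq L assms(2) by simp
    hence "b0 = mu" using mueq by simp
    have meas: "B x0 \<in> borel_measurable M" using G by (simp add: gaussian_rv_def)
    have "measure M {\<omega> \<in> space M. B x0 \<omega> \<ge> b0} = 1"
      using AE `b0 = mu` meas
      by (subst prob_eq_1) (auto elim: AE_mp)
    hence "measure M {\<omega> \<in> space M. B x0 \<omega> \<ge> b0} \<ge> measure M {\<omega> \<in> space M. N \<omega> \<ge> sqrt (x2 - x1) * m}"
      by simp
    thus ?thesis by (simp add: x0_def b0_def)
  next
    case False
    hence vpos: "v > 0" and D: "distributed M lborel (B x0) (normal_density mu (sqrt v))"
      using G by (auto simp: gaussian_rv_def)
    define s where "s = sqrt v"
    have s: "s > 0" using vpos by (simp add: s_def)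
    define Y where "Y = (\<lambda>\<omega>. (- mu / s) + (1 / s) * B x0 \<omega>)"
    have DY: "distributed M lborel Y (normal_density 0 1)"
      using normal_density_affine[OF D, of "1/s" "- mu / s"] s unfolding Y_def s_def[symmetric]
      by simp
    define c where "c = (b0 - mu) / s"
    have "{\<omega> \<in> space M. B x0 \<omega> \<ge> b0} = {\<omega> \<in> space M. Y \<omega> \<ge> c}"
      using s unfolding Y_def c_def by (auto simp: field_simps)
    also have "measure M \<dots> \<ge> measure M {\<omega> \<in> space M. Y \<omega> \<ge> sqrt L * m}"
    proof (rule finite_measure_mono)
      define A where "A = m^2*L^2 - d^2"
      have Apos: "A > 0" using vpos veq L assms(2) unfolding A_def
        by (smt (verit) divide_nonpos_pos mult_pos_pos zero_less_power)
      have sL: "sqrt L > 0" using L by simp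
      have "sqrt (4*m^2*L) = 2*m* sqrt L" using assms(2) L
        by (simp add: real_sqrt_mult)
      hence seq: "s = sqrt A / (2*m* sqrt L)" unfolding s_def veq A_def[symmetric]
        by (simp add: real_sqrt_divide)
      have sA: "sqrt A * sqrt A = A" using Apos by simp
      have sLL: "sqrt L * sqrt L = L" using L by simp
      have "c = sqrt A / sqrt L"
        unfolding c_def mueq A_def[symmetric] seq using Apos sL assms(2) sA sLL
        by (simp add: field_simps)
      moreover have "sqrt A \<le> m * L"
      proof -
        have "sqrt A \<le> sqrt ((m*L)^2)" using d2 unfolding A_def
          by (intro real_sqrt_le_mono) (simp add: power_mult_distrib)
        also have "\<dots> = m * L" using L assms(2) by simp
        finally show ?thesis .
      qed
      ultimately have "c \<le> m * L / sqrt L" using sL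
        by (simp add: divide_right_mono)
      also have "m * L / sqrt L = sqrt L * m"
      proof -
        have "m * L / sqrt L = m * (sqrt L * sqrt L) / sqrt L" using sLL by simp
        also have "\<dots> = sqrt L * m"
        proof -
          have "\<forall>a::real. a > 0 \<longrightarrow> m * (a * a) / a = a * m" by simp
          thus ?thesis using sL by blast
        qed
        finally show ?thesis .
      qed
      finally have "c \<le> sqrt L * m" .
      thus "{\<omega> \<in> space M. sqrt L * m \<le> Y \<omega>} \<subseteq> {\<omega> \<in> space M. c \<le> Y \<omega>}" by auto
      show "{\<omega> \<in> space M. c \<le> Y \<omega>} \<in> sets M"
        using distributed_measurable[OF DY] by measurable
    qed
    also have "measure M {\<omega> \<in> space M. Y \<omega> \<ge> sqrt L * m} = measure M {\<omega> \<in> space M. N \<omega> \<ge> sqrt L * m}"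
      using same_dist_ge[OF DY assms(5)] by simp
    finally show ?thesis by (simp add: x0_def b0_def L_def)
  qed
qed

end
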